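(* Let $\overrightarrow{W}$ be a Morse sequence on a simplicial complex $K$. Then for every $p$, $\widehat{\partial}_p\circ\curlywedge_p=\curlywedge_{p-1}\circ\partial_p$ as maps $K[p]\to\widehat W[p-1]$, and $\widehat{\delta}_p\circ\curlyvee_p=\curlyvee_{p+1}\circ\delta_p$ as maps $K[p]\to\widehat W[p+1]$.
   Context: A simplicial complex $K$ is a finite collection of non-empty finite sets closed under taking non-empty subsets; $\dim\sigma=|\sigma|-1$, $K^{(p)}$ the set of $p$-simplices. A pair $(\sigma,\tau)$ with $\sigma\subsetneq\tau$ is a free pair for $K$ if $\tau$ is the only simplex other than $\sigma$ containing $\sigma$; $K$ is then an elementary expansion of $K\setminus\{\sigma,\tau\}$. If $\nu$ is a facet (maximal simplex) of $K$, $K$ is an elementary filling of $K\setminus\{\nu\}$. A Morse sequence on $K$ is a sequence $\langle\emptyset=K_0,\dots,K_k=K\rangle$ with each $K_i$ an elementary expansion or filling of $K_{i-1}$; simplices added by fillings are critical; for an expansion $K_i=K_{i-1}\cup\{\sigma,\tau\}$, $\sigma\subset\tau$, $(\sigma,\tau)$ is a regular pair, $\sigma$ lower regular, $\tau$ upper regular. $\widehat W$ is the set of critical simplices. $K[p]$ is the $\mathbb{Z}_2$-vector space of subsets of $K^{(p)}$ (sum = symmetric difference, $0=\emptyset$; $K[p]=\{0\}$ if $p<0$ or $p>\dim K$), and $\widehat W[p]=\{c\in K[p]:c\subseteq\widehat W\}$. For $\sigma\in K^{(p)}$, $\partial(\sigma)=\{\tau\in K^{(p-1)}:\tau\subset\sigma\}$,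 $\delta(\sigma)=\{\tau\in K^{(p+1)}:\sigma\subset\tau\}$; $\partial_p:K[p]\to K[p-1]$ and $\delta_p:K[p]\to K[p+1]$ are their linear extensions. The reference map $\curlywedge$ is the unique map assigning to each $p$-simplex an element of $\widehat W[p]$, with linear extension $\curlywedge_p:K[p]\to\widehat W[p]$, such that $\curlywedge(\nu)=\{\nu\}$ for critical $\nu$ and $\curlywedge(\tau)=0=\curlywedge(\partial(\tau))$ for upper regular $\tau$; the coreference map $\curlyvee$ (linear extension $\curlyvee_p$) is the unique such map with $\curlyvee(\nu)=\{\nu\}$ for critical $\nu$ and $\curlyvee(\sigma)=0=\curlyvee(\delta(\sigma))$ for lower regular $\sigma$. The linear maps $\widehat\partial_p:\widehat W[p]\to\widehat W[p-1]$ and $\widehat\delta_p:\widehat W[p]\to\widehat W[p+1]$ are defined by $\widehat\partial_p(c)=\curlywedge_{p-1}(\partial_p(c))$ and $\widehat\delta_p(c)=\curlyvee_{p+1}(\delta_p(c))$. *)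

theory Defs
  imports Main
begin

(* Simplices are finite non-empty sets of vertices of type 'v; a complex is a set of simplices.
   dim sigma = card sigma - 1, so a p-simplex has card = p + 1. *)

definition simplicial_complex :: "'v set set \<Rightarrow> bool" where
  "simplicial_complex K \<longleftrightarrow> finite K \<and>
     (\<forall>\<sigma>\<in>K. finite \<sigma> \<and> \<sigma> \<noteq> {}) \<and>
     (\<forall>\<sigma>\<in>K. \<forall>\<tau>. \<tau> \<noteq> {} \<and> \<tau> \<subseteq> \<sigma> \<longrightarrow> \<tau> \<in> K)"

definition simplices :: "'v set set \<Rightarrow> int \<Rightarrow> 'v set set" where
  "simplices K p = {\<sigma>\<in>K. int (card \<sigma>) = p + 1}"

definition free_pair :: "'v set set \<Rightarrow> 'v set \<Rightarrow> 'v set \<Rightarrow> bool" where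
  "free_pair K \<sigma> \<tau> \<longleftrightarrow> \<sigma> \<in> K \<and> \<tau> \<in> K \<and> \<sigma> \<subset> \<tau> \<and>
     (\<forall>\<rho>\<in>K. \<sigma> \<subseteq> \<rho> \<longrightarrow> \<rho> = \<sigma> \<or> \<rho> = \<tau>)"

definition facet :: "'v set set \<Rightarrow> 'v set \<Rightarrow> bool" where
  "facet K \<nu> \<longleftrightarrow> \<nu> \<in> K \<and> \<not> (\<exists>\<rho>\<in>K. \<nu> \<subset> \<rho>)"

definition elem_expansion :: "'v set set \<Rightarrow> 'v set set \<Rightarrow> bool" where
  "elem_expansion K' K \<longleftrightarrow> simplicial_complex K' \<and>
     (\<exists>\<sigma> \<tau>. free_pair K' \<sigma> \<tau> \<and> K = K' - {\<sigma>, \<tau>})"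

definition elem_filling :: "'v set set \<Rightarrow> 'v set set \<Rightarrow> bool" where
  "elem_filling K' K \<longleftrightarrow> simplicial_complex K' \<and>
     (\<exists>\<nu>. facet K' \<nu> \<and> K = K' - {\<nu>})"

definition morse_seq :: "'v set set \<Rightarrow> 'v set set list \<Rightarrow> bool" where
  "morse_seq K Ks \<longleftrightarrow> Ks \<noteq> [] \<and> hd Ks = {} \<and> last Ks = K \<and>
     (\<forall>i. Suc i < length Ks \<longrightarrow>
        elem_expansion (Ks ! Suc i) (Ks ! i) \<or> elem_filling (Ks ! Suc i) (Ks ! i))"

definition critical :: "'v set set list \<Rightarrow> 'v set \<Rightarrow> bool" where
  "critical Ks \<nu> \<longleftrightarrow> (\<exists>i. Suc i < length Ks \<and>
     elem_filling (Ks ! Suc i) (Ks ! i) \<and> Ks ! Suc i - Ks ! i = {\<nu>})"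

definition regular_pair :: "'v set set list \<Rightarrow> 'v set \<Rightarrow> 'v set \<Rightarrow> bool" where
  "regular_pair Ks \<sigma> \<tau> \<longleftrightarrow> \<sigma> \<subset> \<tau> \<and> (\<exists>i. Suc i < length Ks \<and>
     elem_expansion (Ks ! Suc i) (Ks ! i) \<and> Ks ! Suc i - Ks ! i = {\<sigma>, \<tau>})"

definition lower_regular :: "'v set set list \<Rightarrow> 'v set \<Rightarrow> bool" where
  "lower_regular Ks \<sigma> \<longleftrightarrow> (\<exists>\<tau>. regular_pair Ks \<sigma> \<tau>)"

definition upper_regular :: "'v set set list \<Rightarrow> 'v set \<Rightarrow> bool" where
  "upper_regular Ks \<tau> \<longleftrightarrow> (\<exists>\<sigma>. regular_pair Ks \<sigma> \<tau>)"

(* Z2-linear extension of a map f from simplices to chains: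
   lin f c = symmetric-difference sum of f sigma over sigma in c *)
definition lin :: "('a \<Rightarrow> 'b set) \<Rightarrow> 'a set \<Rightarrow> 'b set" where
  "lin f c = {x. odd (card {\<sigma>\<in>c. x \<in> f \<sigma>})}"

definition bd :: "'v set set \<Rightarrow> 'v set \<Rightarrow> 'v set set" where
  "bd K \<sigma> = {\<tau>\<in>K. \<tau> \<subset> \<sigma> \<and> card \<tau> + 1 = card \<sigma>}"

definition cobd :: "'v set set \<Rightarrow> 'v set \<Rightarrow> 'v set set" where
  "cobd K \<sigma> = {\<tau>\<in>K. \<sigma> \<subset> \<tau> \<and> card \<tau> = card \<sigma> + 1}"

(* f maps each simplex of K to a chain of critical simplices of the same dimension
   (an element of What[p]); outside K it is 0 *)
definition crit_valued :: "'v set set \<Rightarrow> 'v set set list \<Rightarrow> ('v set \<Rightarrow> 'v set set) \<Rightarrow> bool" where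
  "crit_valued K Ks f \<longleftrightarrow> (\<forall>\<sigma>. \<sigma> \<notin> K \<longrightarrow> f \<sigma> = {}) \<and>
     (\<forall>\<sigma>\<in>K. f \<sigma> \<subseteq> {\<nu>\<in>K. critical Ks \<nu> \<and> card \<nu> = card \<sigma>})"

definition reference :: "'v set set \<Rightarrow> 'v set set list \<Rightarrow> 'v set \<Rightarrow> 'v set set" where
  "reference K Ks = (THE f. crit_valued K Ks f \<and>
     (\<forall>\<nu>\<in>K. critical Ks \<nu> \<longrightarrow> f \<nu> = {\<nu>}) \<and>
     (\<forall>\<tau>\<in>K. upper_regular Ks \<tau> \<longrightarrow> f \<tau> = {} \<and> lin f (bd K \<tau>) = {}))"

definition coreference :: "'v set set \<Rightarrow> 'v set set list \<Rightarrow> 'v set \<Rightarrow> 'v set set" where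
  "coreference K Ks = (THE f. crit_valued K Ks f \<and>
     (\<forall>\<nu>\<in>K. critical Ks \<nu> \<longrightarrow> f \<nu> = {\<nu>}) \<and>
     (\<forall>\<sigma>\<in>K. lower_regular Ks \<sigma> \<longrightarrow> f \<sigma> = {} \<and> lin f (cobd K \<sigma>) = {}))"

definition hat_bd :: "'v set set \<Rightarrow> 'v set set list \<Rightarrow> 'v set set \<Rightarrow> 'v set set" where
  "hat_bd K Ks c = lin (reference K Ks) (lin (bd K) c)"

definition hat_cobd :: "'v set set \<Rightarrow> 'v set set list \<Rightarrow> 'v set set \<Rightarrow> 'v set set" where
  "hat_cobd K Ks c = lin (coreference K Ks) (lin (cobd K) c)"

end

theory Submission
  imports Defs
begin


lemma lin_cong: "(\<And>s. s \<in> c \<Longrightarrow> f s = g s) \<Longrightarrow> lin f c = lin g c"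
proof -
  assume h: "\<And>s. s \<in> c \<Longrightarrow> f s = g s"
  have "\<And>x. {s\<in>c. x \<in> f s} = {s\<in>c. x \<in> g s}" using h by auto
  then show ?thesis by (simp add: lin_def)
qed

lemma lin_empty[simp]: "lin f {} = {}"
  by (simp add: lin_def)

lemma lin_single: "lin f {a} = f a"
proof -
  have "\<And>x. {s\<in>{a}. x \<in> f s} = (if x \<in> f a then {a} else {})" by auto
  then show ?thesis by (auto simp: lin_def)
qed

lemma lin_sub: "lin f c \<subseteq> \<Union>(f ` c)"
proof
  fix x assume "x \<in> lin f c"
  then have "odd (card {s\<in>c. x \<in> f s})" by (simp add: lin_def)
  then have "{s\<in>c. x \<in> f s} \<noteq> {}" by (metis card.empty odd_card_imp_not_empty)
  then show "x \<in> \<Union>(f ` c)" by auto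
qed

lemma lin_finite: "finite c \<Longrightarrow> (\<And>s. s \<in> c \<Longrightarrow> finite (f s)) \<Longrightarrow> finite (lin f c)"
proof -
  assume "finite c" "\<And>s. s \<in> c \<Longrightarrow> finite (f s)"
  then have "finite (\<Union>(f ` c))" by blast
  then show ?thesis using lin_sub finite_subset by metis
qed

lemma lin_sd:
  assumes "finite A" "finite B"
  shows "lin f ((A - B) \<union> (B - A)) = (lin f A - lin f B) \<union> (lin f B - lin f A)"
proof -
  have key: "odd (card {s\<in>(A - B) \<union> (B - A). x \<in> f s}) \<longleftrightarrow>
      (odd (card {s\<in>A. x \<in> f s}) \<noteq> odd (card {s\<in>B. x \<in> f s}))" for x
  proof -
    define a where "a = card {s\<in>A - B. x \<in> f s}"
    define b where "b = card {s\<in>B - A. x \<in> f s}"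
    define c where "c = card {s\<in>A \<inter> B. x \<in> f s}"
    have e1: "{s\<in>(A - B) \<union> (B - A). x \<in> f s} = {s\<in>A - B. x \<in> f s} \<union> {s\<in>B - A. x \<in> f s}" by auto
    have e2: "{s\<in>A. x \<in> f s} = {s\<in>A - B. x \<in> f s} \<union> {s\<in>A \<inter> B. x \<in> f s}" by auto
    have e3: "{s\<in>B. x \<in> f s} = {s\<in>B - A. x \<in> f s} \<union> {s\<in>A \<inter> B. x \<in> f s}" by auto
    have c1: "card {s\<in>(A - B) \<union> (B - A). x \<in> f s} = a + b"
      unfolding e1 a_def b_def by (rule card_Un_disjoint) (use assms in auto)
    have c2: "card {s\<in>A. x \<in> f s} = a + c"
      unfolding e2 a_def c_def by (rule card_Un_disjoint) (use assms in auto)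
    have c3: "card {s\<in>B. x \<in> f s} = b + c"
      unfolding e3 b_def c_def by (rule card_Un_disjoint) (use assms in auto)
    show ?thesis unfolding c1 c2 c3 by presburger
  qed
  show ?thesis
  proof (rule set_eqI)
    fix x
    have "x \<in> lin f ((A - B) \<union> (B - A)) \<longleftrightarrow> odd (card {s\<in>(A - B) \<union> (B - A). x \<in> f s})"
      by (simp add: lin_def)
    also have "\<dots> \<longleftrightarrow> ((x \<in> lin f A) \<noteq> (x \<in> lin f B))" using key[of x] by (simp add: lin_def)
    finally show "x \<in> lin f ((A - B) \<union> (B - A)) \<longleftrightarrow> x \<in> (lin f A - lin f B) \<union> (lin f B - lin f A)"
      by blast
  qed
qed

lemma lin_insert:
  assumes "finite c" "a \<notin> c"
  shows "lin f (insert a c) = (f a - lin f c) \<union> (lin f c - f a)"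
proof -
  have eq: "insert a c = ({a} - c) \<union> (c - {a})" using assms by auto
  have "lin f (insert a c) = lin f (({a} - c) \<union> (c - {a}))" by (rule arg_cong[where f="lin f"], rule eq)
  also have "\<dots> = (lin f {a} - lin f c) \<union> (lin f c - lin f {a})" by (rule lin_sd) (use assms in auto)
  also have "\<dots> = (f a - lin f c) \<union> (lin f c - f a)" by (simp only: lin_single)
  finally show ?thesis .
qed

lemma lin_comp:
  assumes "finite c" "\<And>s. s \<in> c \<Longrightarrow> finite (g s)"
  shows "lin f (lin g c) = lin (\<lambda>s. lin f (g s)) c"
  using assms
proof (induction c rule: finite_induct)
  case empty
  then show ?case by simp
next
  case (insert a c)
  have fg: "finite (g a)" using insert by auto
  have fl: "finite (lin g c)" using insert by (intro lin_finite) auto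
  have "lin f (lin g (insert a c)) = lin f ((g a - lin g c) \<union> (lin g c - g a))"
    using insert by (simp add: lin_insert)
  also have "\<dots> = (lin f (g a) - lin f (lin g c)) \<union> (lin f (lin g c) - lin f (g a))"
    by (rule lin_sd[OF fg fl])
  also have "\<dots> = lin (\<lambda>s. lin f (g s)) (insert a c)"
    using insert by (simp add: lin_insert)
  finally show ?case .
qed

locale mabs =
  fixes K :: "'a set" and d :: "'a \<Rightarrow> 'a set" and crit L U :: "'a \<Rightarrow> bool"
    and Q :: "'a \<Rightarrow> 'a" and r g :: "'a \<Rightarrow> nat"
  assumes finK: "finite K"
  and d_sub: "\<And>s. s \<in> K \<Longrightarrow> d s \<subseteq> K"
  and dd: "\<And>s. s \<in> K \<Longrightarrow> lin d (d s) = {}"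
  and cover: "\<And>s. s \<in> K \<Longrightarrow> crit s \<or> L s \<or> U s"
  and excl1: "\<And>s. s \<in> K \<Longrightarrow> crit s \<Longrightarrow> \<not> L s \<and> \<not> U s"
  and excl2: "\<And>s. s \<in> K \<Longrightarrow> L s \<Longrightarrow> \<not> U s"
  and LQ: "\<And>s. s \<in> K \<Longrightarrow> L s \<Longrightarrow> Q s \<in> K \<and> U (Q s) \<and> s \<in> d (Q s) \<and>
              (\<forall>\<rho>\<in>d (Q s) - {s}. r \<rho> < r s \<and> g \<rho> = g s)"
  and UQ: "\<And>t. t \<in> K \<Longrightarrow> U t \<Longrightarrow> \<exists>s\<in>K. L s \<and> Q s = t"
begin

definition F where
  "F = wfrec (measure r) (\<lambda>H s. if s \<notin> K then {} else if crit s then {s}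
          else if L s then lin H (d (Q s) - {s}) else {})"

lemma F_eq: "F s = (if s \<notin> K then {} else if crit s then {s}
          else if L s then lin F (d (Q s) - {s}) else {})"
proof -
  have "F s = (\<lambda>H s. if s \<notin> K then {} else if crit s then {s}
          else if L s then lin H (d (Q s) - {s}) else {}) (cut F (measure r) s) s"
    unfolding F_def by (rule wfrec) simp
  also have "\<dots> = (if s \<notin> K then {} else if crit s then {s}
          else if L s then lin F (d (Q s) - {s}) else {})"
  proof (cases "s \<in> K \<and> \<not> crit s \<and> L s")
    case True
    have "lin (cut F (measure r) s) (d (Q s) - {s}) = lin F (d (Q s) - {s})"
      by (rule lin_cong) (use LQ[of s] True in \<open>auto simp: cut_apply\<close>)
    then show ?thesis using True by simp
  next
    case False
    then show ?thesis by auto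
  qed
  finally show ?thesis .
qed

lemma finite_d: "s \<in> K \<Longrightarrow> finite (d s)"
  using d_sub finK finite_subset by blast

lemma F_sub: "s \<in> K \<Longrightarrow> F s \<subseteq> {\<nu>\<in>K. crit \<nu> \<and> g \<nu> = g s}"
proof (induction "r s" arbitrary: s rule: less_induct)
  case less
  show ?case
  proof (cases "crit s")
    case True
    then show ?thesis using less.prems F_eq[of s] by auto
  next
    case nc: False
    show ?thesis
    proof (cases "L s")
      case True
      note q = LQ[OF less.prems True]
      have "F s = lin F (d (Q s) - {s})" using F_eq[of s] nc True less.prems by simp
      also have "\<dots> \<subseteq> \<Union>(F ` (d (Q s) - {s}))" by (rule lin_sub)
      also have "\<dots> \<subseteq> {\<nu>\<in>K. crit \<nu> \<and> g \<nu> = g s}"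
      proof
        fix x assume "x \<in> \<Union>(F ` (d (Q s) - {s}))"
        then obtain \<rho> where \<rho>: "\<rho> \<in> d (Q s) - {s}" "x \<in> F \<rho>" by auto
        have "\<rho> \<in> K" using \<rho> d_sub q by blast
        moreover have "r \<rho> < r s" "g \<rho> = g s" using q \<rho> by auto
        ultimately show "x \<in> {\<nu>\<in>K. crit \<nu> \<and> g \<nu> = g s}" using less.hyps \<rho> by fastforce
      qed
      finally show ?thesis .
    next
      case False
      then show ?thesis using F_eq[of s] nc by simp
    qed
  qed
qed

lemma F_out: "s \<notin> K \<Longrightarrow> F s = {}"
  using F_eq by simp

lemma F_crit: "s \<in> K \<Longrightarrow> crit s \<Longrightarrow> F s = {s}"
  using F_eq by simp

lemma F_U: "s \<in> K \<Longrightarrow> U s \<Longrightarrow> F s = {}"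
  using F_eq[of s] excl1 excl2 by auto

lemma F_L: "s \<in> K \<Longrightarrow> L s \<Longrightarrow> F s = lin F (d (Q s) - {s})"
  using F_eq[of s] excl1 by auto

lemma finite_F: "finite (F s)"
  by (metis (no_types, lifting) F_out F_sub finK finite.emptyI finite_subset mem_Collect_eq subsetI)

lemma finite_dF: "x \<in> F s \<Longrightarrow> finite (d x)"
  using F_out F_sub finite_d by (cases "s \<in> K") auto

lemma lin_split:
  assumes "s \<in> K" "L s"
  shows "lin f (d (Q s)) = (f s - lin f (d (Q s) - {s})) \<union> (lin f (d (Q s) - {s}) - f s)"
proof -
  note q = LQ[OF assms]
  have "d (Q s) = insert s (d (Q s) - {s})" using q by auto
  moreover have "finite (d (Q s) - {s})" using finite_d q by auto
  ultimately show ?thesis by (metis Diff_iff insertI1 lin_insert)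
qed

lemma F_Ud: "t \<in> K \<Longrightarrow> U t \<Longrightarrow> lin F (d t) = {}"
proof -
  assume a: "t \<in> K" "U t"
  then obtain s where s: "s \<in> K" "L s" "Q s = t" using UQ by blast
  have "lin F (d (Q s)) = (F s - lin F (d (Q s) - {s})) \<union> (lin F (d (Q s) - {s}) - F s)"
    by (rule lin_split[OF s(1,2)])
  also have "\<dots> = {}" using F_L[OF s(1,2)] by simp
  finally show ?thesis using s by simp
qed

definition P where
  "P f \<longleftrightarrow> ((\<forall>s. s \<notin> K \<longrightarrow> f s = {}) \<and> (\<forall>s\<in>K. f s \<subseteq> {\<nu>\<in>K. crit \<nu> \<and> g \<nu> = g s})) \<and>
     (\<forall>\<nu>\<in>K. crit \<nu> \<longrightarrow> f \<nu> = {\<nu>}) \<and>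
     (\<forall>t\<in>K. U t \<longrightarrow> f t = {} \<and> lin f (d t) = {})"

lemma P_F: "P F"
  unfolding P_def using F_out F_sub F_crit F_U F_Ud by blast

lemma uniq_pt: "P f \<Longrightarrow> s \<in> K \<Longrightarrow> f s = F s"
proof (induction "r s" arbitrary: s rule: less_induct)
  case less
  note pf = less.prems(1)[unfolded P_def]
  consider "crit s" | "L s" | "U s" using cover less.prems by blast
  then show ?case
  proof cases
    case 1
    then show ?thesis using pf F_crit less.prems by auto
  next
    case 3
    then show ?thesis using pf F_U less.prems by auto
  next
    case 2
    note q = LQ[OF less.prems(2) 2]
    have "lin f (d (Q s)) = {}" using pf q by blast
    then have "f s = lin f (d (Q s) - {s})" using lin_split[OF less.prems(2) 2, of f] by blast
    also have "\<dots> = lin F (d (Q s) - {s})"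
    proof (rule lin_cong)
      fix \<rho> assume \<rho>: "\<rho> \<in> d (Q s) - {s}"
      have "\<rho> \<in> K" using \<rho> d_sub q by blast
      moreover have "r \<rho> < r s" using q \<rho> by auto
      ultimately show "f \<rho> = F \<rho>" using less.hyps less.prems(1) by blast
    qed
    also have "\<dots> = F s" using F_L less.prems 2 by simp
    finally show ?thesis .
  qed
qed

lemma the_F: "(THE f. P f) = F"
proof (rule the_equality)
  show "P F" by (rule P_F)
next
  fix f assume pf: "P f"
  show "f = F"
  proof
    fix s show "f s = F s"
      using uniq_pt[OF pf] pf[unfolded P_def] F_out by (cases "s \<in> K") auto
  qed
qed

lemma main_pt: "s \<in> K \<Longrightarrow> lin F (lin d (F s)) = lin F (d s)"
proof (induction "r s" arbitrary: s rule: less_induct)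
  case less
  consider "crit s" | "L s" | "U s" using cover less.prems by blast
  then show ?case
  proof cases
    case 1
    then show ?thesis using F_crit less.prems by (simp add: lin_single)
  next
    case 3
    then show ?thesis using F_U F_Ud less.prems by simp
  next
    case 2
    note q = LQ[OF less.prems 2]
    define c where "c = d (Q s) - {s}"
    have cK: "c \<subseteq> K" using c_def d_sub q by blast
    have fc: "finite c" using cK finK finite_subset by blast
    have "lin d (d (Q s)) = {}" using dd q by blast
    then have ds: "lin d c = d s" using lin_split[OF less.prems 2, of d] c_def by blast
    have "lin F (lin d (F s)) = lin F (lin d (lin F c))" using F_L less.prems 2 c_def by simp
    also have "\<dots> = lin F (lin (\<lambda>\<rho>. lin d (F \<rho>)) c)"
      using lin_comp[OF fc, of F d] finite_F by simp
    also have "\<dots> = lin (\<lambda>\<rho>. lin F (lin d (F \<rho>))) c"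
      using cK finite_dF finite_F by (intro lin_comp[OF fc] lin_finite) auto
    also have "\<dots> = lin (\<lambda>\<rho>. lin F (d \<rho>)) c"
    proof (rule lin_cong)
      fix \<rho> assume \<rho>: "\<rho> \<in> c"
      have "\<rho> \<in> K" using \<rho> cK by blast
      moreover have "r \<rho> < r s" using q \<rho> c_def by auto
      ultimately show "lin F (lin d (F \<rho>)) = lin F (d \<rho>)" using less.hyps by blast
    qed
    also have "\<dots> = lin F (lin d c)"
      using cK finite_d by (intro lin_comp[symmetric] fc) auto
    finally show ?thesis using ds by simp
  qed
qed

lemma main: "c \<subseteq> K \<Longrightarrow> lin F (lin d (lin F c)) = lin F (lin d c)"
proof -
  assume cK: "c \<subseteq> K"
  have fc: "finite c" using cK finK finite_subset by blast
  have "lin F (lin d (lin F c)) = lin F (lin (\<lambda>\<rho>. lin d (F \<rho>)) c)"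
    using lin_comp[OF fc, of F d] finite_F by simp
  also have "\<dots> = lin (\<lambda>\<rho>. lin F (lin d (F \<rho>))) c"
    using cK finite_dF finite_F by (intro lin_comp[OF fc] lin_finite) auto
  also have "\<dots> = lin (\<lambda>\<rho>. lin F (d \<rho>)) c"
    using cK main_pt by (intro lin_cong) auto
  also have "\<dots> = lin F (lin d c)"
    using cK finite_d by (intro lin_comp[symmetric] fc) auto
  finally show ?thesis .
qed

end



lemma interval2:
  assumes "finite B" "A \<subseteq> B" "card B = card A + 2"
  shows "card {\<rho>. A \<subseteq> \<rho> \<and> \<rho> \<subseteq> B \<and> card \<rho> = card A + 1} = 2"
proof -
  have fA: "finite A" using assms finite_subset by blast
  have "card (B - A) = 2" using assms fA by (simp add: card_Diff_subset)
  then obtain a b where ab: "a \<noteq> b" "B - A = {a, b}" by (meson card_2_iff)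
  have "{\<rho>. A \<subseteq> \<rho> \<and> \<rho> \<subseteq> B \<and> card \<rho> = card A + 1} = {insert a A, insert b A}"
  proof (intro equalityI subsetI)
    fix \<rho> assume "\<rho> \<in> {\<rho>. A \<subseteq> \<rho> \<and> \<rho> \<subseteq> B \<and> card \<rho> = card A + 1}"
    then have \<rho>: "A \<subseteq> \<rho>" "\<rho> \<subseteq> B" "card \<rho> = card A + 1" by auto
    have f\<rho>: "finite \<rho>" using \<rho> assms finite_subset by blast
    have "card (\<rho> - A) = 1" using \<rho> f\<rho> fA by (simp add: card_Diff_subset)
    then obtain c where c: "\<rho> - A = {c}" by (meson card_1_singletonE)
    have "c \<in> {a, b}" using c ab \<rho> by blast
    moreover have "\<rho> = insert c A" using c \<rho> by blast
    ultimately show "\<rho> \<in> {insert a A, insert b A}" by auto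
  next
    fix \<rho> assume "\<rho> \<in> {insert a A, insert b A}"
    moreover have "a \<notin> A" "b \<notin> A" "a \<in> B" "b \<in> B" using ab by auto
    ultimately show "\<rho> \<in> {\<rho>. A \<subseteq> \<rho> \<and> \<rho> \<subseteq> B \<and> card \<rho> = card A + 1}"
      using fA assms by auto
  qed
  moreover have "insert a A \<noteq> insert b A" using ab by auto
  ultimately show ?thesis by simp
qed

lemma sc_fin: "simplicial_complex K \<Longrightarrow> s \<in> K \<Longrightarrow> finite s \<and> s \<noteq> {}"
  unfolding simplicial_complex_def by blast

lemma sc_sub: "simplicial_complex K \<Longrightarrow> s \<in> K \<Longrightarrow> t \<noteq> {} \<Longrightarrow> t \<subseteq> s \<Longrightarrow> t \<in> K"
  unfolding simplicial_complex_def by blast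

lemma bd_bd:
  assumes sc: "simplicial_complex K" and sK: "s \<in> K"
  shows "lin (bd K) (bd K s) = {}"
proof -
  have "even (card {\<rho>\<in>bd K s. x \<in> bd K \<rho>})" for x
  proof (cases "{\<rho>\<in>bd K s. x \<in> bd K \<rho>} = {}")
    case True show ?thesis unfolding True by simp
  next
    case False
    then obtain \<rho>0 where r0: "\<rho>0 \<in> bd K s" "x \<in> bd K \<rho>0" by auto
    have fs: "finite s" using sc sK sc_fin by blast
    have xK: "x \<in> K" and xs: "x \<subseteq> s" and cx: "card s = card x + 2"
      using r0 by (auto simp: bd_def)
    have "{\<rho>\<in>bd K s. x \<in> bd K \<rho>} = {\<rho>. x \<subseteq> \<rho> \<and> \<rho> \<subseteq> s \<and> card \<rho> = card x + 1}"
    proof (intro equalityI subsetI)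
      fix \<rho> assume "\<rho> \<in> {\<rho>\<in>bd K s. x \<in> bd K \<rho>}"
      then show "\<rho> \<in> {\<rho>. x \<subseteq> \<rho> \<and> \<rho> \<subseteq> s \<and> card \<rho> = card x + 1}"
        by (auto simp: bd_def)
    next
      fix \<rho> assume "\<rho> \<in> {\<rho>. x \<subseteq> \<rho> \<and> \<rho> \<subseteq> s \<and> card \<rho> = card x + 1}"
      then have \<rho>: "x \<subseteq> \<rho>" "\<rho> \<subseteq> s" "card \<rho> = card x + 1" by auto
      have "\<rho> \<noteq> {}" using \<rho>(3) by auto
      then have "\<rho> \<in> K" using sc_sub[OF sc sK] \<rho> by blast
      moreover have "\<rho> \<noteq> s" "x \<noteq> \<rho>" using \<rho> cx by auto
      ultimately show "\<rho> \<in> {\<rho>\<in>bd K s. x \<in> bd K \<rho>}"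
        using \<rho> xK cx by (auto simp: bd_def)
    qed
    then show ?thesis using interval2[OF fs xs cx] by simp
  qed
  then show ?thesis by (simp add: lin_def)
qed

lemma cobd_cobd:
  assumes sc: "simplicial_complex K" and sK: "s \<in> K"
  shows "lin (cobd K) (cobd K s) = {}"
proof -
  have "even (card {\<rho>\<in>cobd K s. x \<in> cobd K \<rho>})" for x
  proof (cases "{\<rho>\<in>cobd K s. x \<in> cobd K \<rho>} = {}")
    case True show ?thesis unfolding True by simp
  next
    case False
    then obtain \<rho>0 where r0: "\<rho>0 \<in> cobd K s" "x \<in> cobd K \<rho>0" by auto
    have r0': "\<rho>0 \<in> K" "s \<subset> \<rho>0" "card \<rho>0 = card s + 1" "x \<in> K" "\<rho>0 \<subset> x" "card x = card \<rho>0 + 1"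
      using r0 unfolding cobd_def by simp_all
    have xK: "x \<in> K" and xs: "s \<subseteq> x" and cx: "card x = card s + 2"
      using r0' by auto
    have fx: "finite x" using sc xK sc_fin by blast
    have sne: "s \<noteq> {}" using sc sK sc_fin by blast
    have "{\<rho>\<in>cobd K s. x \<in> cobd K \<rho>} = {\<rho>. s \<subseteq> \<rho> \<and> \<rho> \<subseteq> x \<and> card \<rho> = card s + 1}"
    proof (intro equalityI subsetI)
      fix \<rho> assume "\<rho> \<in> {\<rho>\<in>cobd K s. x \<in> cobd K \<rho>}"
      then have "\<rho> \<in> K" "s \<subset> \<rho>" "card \<rho> = card s + 1" "\<rho> \<subset> x"
        unfolding cobd_def by simp_all
      then show "\<rho> \<in> {\<rho>. s \<subseteq> \<rho> \<and> \<rho> \<subseteq> x \<and> card \<rho> = card s + 1}"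
        by auto
    next
      fix \<rho> assume "\<rho> \<in> {\<rho>. s \<subseteq> \<rho> \<and> \<rho> \<subseteq> x \<and> card \<rho> = card s + 1}"
      then have \<rho>: "s \<subseteq> \<rho>" "\<rho> \<subseteq> x" "card \<rho> = card s + 1" by auto
      have "\<rho> \<noteq> {}" using \<rho> sne by auto
      then have "\<rho> \<in> K" using sc_sub[OF sc xK] \<rho> by blast
      moreover have "\<rho> \<noteq> x" using \<rho>(3) cx by (metis add_left_cancel numeral_One numeral_eq_iff semiring_norm(85))
      moreover have "s \<noteq> \<rho>" using \<rho>(3) by (metis n_not_Suc_n Suc_eq_plus1)
      moreover have "card x = card \<rho> + 1" using \<rho>(3) cx by simp
      ultimately show "\<rho> \<in> {\<rho>\<in>cobd K s. x \<in> cobd K \<rho>}"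
        using \<rho> xK unfolding cobd_def by auto
    qed
    then show ?thesis using interval2[OF fx xs cx] by simp
  qed
  then show ?thesis by (simp add: lin_def)
qed

definition stp :: "'v set set list \<Rightarrow> 'v set \<Rightarrow> nat" where
  "stp Ks s = (THE i. Suc i < length Ks \<and> s \<in> Ks ! Suc i \<and> s \<notin> Ks ! i)"

context
  fixes K :: "'v set set" and Ks :: "'v set set list"
  assumes sc: "simplicial_complex K" and ms: "morse_seq K Ks"
begin

lemma step_cases: "Suc i < length Ks \<Longrightarrow> elem_expansion (Ks ! Suc i) (Ks ! i) \<or> elem_filling (Ks ! Suc i) (Ks ! i)"
  using ms by (simp add: morse_seq_def)

lemma step_mono: "Suc i < length Ks \<Longrightarrow> Ks ! i \<subseteq> Ks ! Suc i"
  using step_cases[of i] by (auto simp: elem_expansion_def elem_filling_def)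

lemma mono: "i \<le> j \<Longrightarrow> j < length Ks \<Longrightarrow> Ks ! i \<subseteq> Ks ! j"
proof (induction j rule: dec_induct)
  case base then show ?case by simp
next
  case (step j) then show ?case using step_mono[of j] by auto
qed

lemma Ks0: "Ks ! 0 = {}"
proof -
  have "Ks \<noteq> []" "hd Ks = {}" using ms by (simp_all add: morse_seq_def)
  then show ?thesis by (simp add: hd_conv_nth)
qed

lemma K_last: "K = Ks ! (length Ks - 1)"
proof -
  have "Ks \<noteq> []" "last Ks = K" using ms by (simp_all add: morse_seq_def)
  then show ?thesis by (simp add: last_conv_nth)
qed

lemma KsK: "i < length Ks \<Longrightarrow> Ks ! i \<subseteq> K"
proof -
  assume "i < length Ks"
  moreover have "K = Ks ! (length Ks - 1)" by (rule K_last)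
  ultimately show ?thesis using mono[of i "length Ks - 1"] by auto
qed

lemma exist_aux: "j < length Ks \<Longrightarrow> s \<in> Ks ! j \<Longrightarrow> \<exists>i. Suc i \<le> j \<and> s \<in> Ks ! Suc i \<and> s \<notin> Ks ! i"
proof (induction j)
  case 0 then show ?case using Ks0 by simp
next
  case (Suc j)
  show ?case
  proof (cases "s \<in> Ks ! j")
    case True
    moreover have "j < length Ks" using Suc.prems by simp
    ultimately obtain i where "Suc i \<le> j" "s \<in> Ks ! Suc i" "s \<notin> Ks ! i" using Suc.IH by blast
    then show ?thesis by (intro exI[of _ i]) auto
  next
    case False
    then show ?thesis using Suc.prems by (intro exI[of _ j]) auto
  qed
qed

lemma step_unique:
  assumes "Suc i < length Ks" "s \<in> Ks ! Suc i" "s \<notin> Ks ! i"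
    "Suc j < length Ks" "s \<in> Ks ! Suc j" "s \<notin> Ks ! j"
  shows "i = j"
proof (rule ccontr)
  assume "i \<noteq> j"
  then consider "Suc i \<le> j" | "Suc j \<le> i" by linarith
  then show False
  proof cases
    case 1 then show False using mono[of "Suc i" j] assms by auto
  next
    case 2 then show False using mono[of "Suc j" i] assms by auto
  qed
qed

lemma stp_eq: "Suc i < length Ks \<Longrightarrow> s \<in> Ks ! Suc i \<Longrightarrow> s \<notin> Ks ! i \<Longrightarrow> stp Ks s = i"
proof -
  assume a: "Suc i < length Ks" "s \<in> Ks ! Suc i" "s \<notin> Ks ! i"
  show ?thesis unfolding stp_def
  proof (rule the_equality)
    show "Suc i < length Ks \<and> s \<in> Ks ! Suc i \<and> s \<notin> Ks ! i" using a by simp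
  next
    fix j assume "Suc j < length Ks \<and> s \<in> Ks ! Suc j \<and> s \<notin> Ks ! j"
    then show "j = i" using step_unique[of j s i] a by simp
  qed
qed

lemma stp_prop: "s \<in> K \<Longrightarrow> Suc (stp Ks s) < length Ks \<and> s \<in> Ks ! Suc (stp Ks s) \<and> s \<notin> Ks ! stp Ks s"
proof -
  assume sK: "s \<in> K"
  have ne: "Ks \<noteq> []" using ms by (simp add: morse_seq_def)
  have "K = Ks ! (length Ks - 1)" by (rule K_last)
  then obtain i where i: "Suc i \<le> length Ks - 1" "s \<in> Ks ! Suc i" "s \<notin> Ks ! i"
    using exist_aux[of "length Ks - 1" s] sK ne by auto
  then have "Suc i < length Ks" by linarith
  then have "stp Ks s = i" using stp_eq i(2,3) by simp
  then show ?thesis using i \<open>Suc i < length Ks\<close> by simp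
qed

lemma stp_lt: "j < length Ks \<Longrightarrow> s \<in> Ks ! j \<Longrightarrow> stp Ks s < j"
proof (rule ccontr)
  assume a: "j < length Ks" "s \<in> Ks ! j" "\<not> stp Ks s < j"
  then have sK: "s \<in> K" using KsK by blast
  note p = stp_prop[OF sK]
  have "Ks ! j \<subseteq> Ks ! stp Ks s" using a p by (intro mono) auto
  then show False using a p by auto
qed

lemma stp_ge: "j < length Ks \<Longrightarrow> s \<in> K \<Longrightarrow> s \<notin> Ks ! j \<Longrightarrow> j \<le> stp Ks s"
proof (rule ccontr)
  assume a: "j < length Ks" "s \<in> K" "s \<notin> Ks ! j" "\<not> j \<le> stp Ks s"
  note p = stp_prop[OF a(2)]
  have "Ks ! Suc (stp Ks s) \<subseteq> Ks ! j" using a p by (intro mono) auto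
  then show False using a p by auto
qed

lemma crit_stp: "critical Ks s \<Longrightarrow> Suc (stp Ks s) < length Ks \<and> Ks ! Suc (stp Ks s) - Ks ! stp Ks s = {s}"
proof -
  assume "critical Ks s"
  then obtain i where i: "Suc i < length Ks" "Ks ! Suc i - Ks ! i = {s}" unfolding critical_def by blast
  then have "s \<in> Ks ! Suc i - Ks ! i" by simp
  then have "stp Ks s = i" using stp_eq[OF i(1)] by simp
  then show ?thesis using i by simp
qed

lemma rp_stp: "regular_pair Ks s t \<Longrightarrow> stp Ks t = stp Ks s \<and> Suc (stp Ks s) < length Ks \<and>
   s \<subset> t \<and> Ks ! Suc (stp Ks s) - Ks ! stp Ks s = {s, t} \<and> elem_expansion (Ks ! Suc (stp Ks s)) (Ks ! stp Ks s)"
proof -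
  assume "regular_pair Ks s t"
  then obtain i where i: "s \<subset> t" "Suc i < length Ks" "elem_expansion (Ks ! Suc i) (Ks ! i)"
    "Ks ! Suc i - Ks ! i = {s, t}" unfolding regular_pair_def by blast
  have "s \<in> Ks ! Suc i - Ks ! i" "t \<in> Ks ! Suc i - Ks ! i" using i(4) by simp_all
  then have "stp Ks s = i" "stp Ks t = i" using stp_eq[OF i(2)] by simp_all
  then show ?thesis using i by simp
qed

lemma dbl1: "{a, b} = {a, c} \<Longrightarrow> b \<noteq> a \<Longrightarrow> b = c"
  by (auto simp: doubleton_eq_iff)

lemma dbl2: "{b, a} = {c, a} \<Longrightarrow> b \<noteq> a \<Longrightarrow> b = c"
  by (auto simp: doubleton_eq_iff)

lemma sgl: "{a} = {b, c} \<Longrightarrow> b = c"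
proof -
  assume h: "{a} = {b, c}"
  have "b \<in> {a}" "c \<in> {a}" unfolding h by simp_all
  then show ?thesis by simp
qed

lemma rp_free: "regular_pair Ks s t \<Longrightarrow> stp Ks t = stp Ks s \<and> Suc (stp Ks s) < length Ks \<and>
   simplicial_complex (Ks ! Suc (stp Ks s)) \<and> free_pair (Ks ! Suc (stp Ks s)) s t \<and>
   Ks ! stp Ks s = Ks ! Suc (stp Ks s) - {s, t}"
proof -
  assume rp: "regular_pair Ks s t"
  define i where "i = stp Ks s"
  note r = rp_stp[OF rp, folded i_def]
  have i: "Suc i < length Ks" "s \<subset> t" "Ks ! Suc i - Ks ! i = {s, t}" "elem_expansion (Ks ! Suc i) (Ks ! i)"
    using r by simp_all
  obtain a b where ab: "simplicial_complex (Ks ! Suc i)" "free_pair (Ks ! Suc i) a b"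
    "Ks ! i = Ks ! Suc i - {a, b}" using i(4) unfolding elem_expansion_def by blast
  have ab': "a \<in> Ks ! Suc i" "b \<in> Ks ! Suc i" "a \<subset> b" using ab(2) unfolding free_pair_def by auto
  have "Ks ! Suc i - Ks ! i = {a, b}" using ab(3) ab' by blast
  then have "{a, b} = {s, t}" using i(3) by simp
  then have "(a = s \<and> b = t) \<or> (a = t \<and> b = s)" by (simp add: doubleton_eq_iff)
  moreover have "\<not> (a = t \<and> b = s)"
  proof
    assume "a = t \<and> b = s"
    then have "t \<subset> s" using ab'(3) by simp
    then show False using i(2) by (simp add: order.asym)
  qed
  ultimately have "a = s \<and> b = t" by blast
  then have "simplicial_complex (Ks ! Suc i) \<and> free_pair (Ks ! Suc i) s t \<and> Ks ! i = Ks ! Suc i - {s, t}"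
    using ab by simp
  then show ?thesis using r i(1) unfolding i_def by simp
qed

lemma free_card: "simplicial_complex C \<Longrightarrow> free_pair C s t \<Longrightarrow> card t = card s + 1"
proof -
  assume c: "simplicial_complex C" "free_pair C s t"
  then have st: "s \<in> C" "t \<in> C" "s \<subset> t" "\<forall>\<rho>\<in>C. s \<subseteq> \<rho> \<longrightarrow> \<rho> = s \<or> \<rho> = t"
    unfolding free_pair_def by auto
  have ft: "finite t" using c(1) st sc_fin by blast
  obtain x where x: "x \<in> t" "x \<notin> s" using st by blast
  have sub: "insert x s \<subseteq> t" using x(1) st(3) by blast
  have ins: "insert x s \<in> C" using sc_sub[OF c(1) st(2) _ sub] by simp
  have "s \<subseteq> insert x s" by (rule subset_insertI)
  then have d: "insert x s = s \<or> insert x s = t" using st(4) ins by simp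
  have "insert x s \<noteq> s" using x(2) by blast
  then have e: "insert x s = t" using d by simp
  have fs: "finite s" using ft st(3) finite_subset by auto
  have "card (insert x s) = card s + 1" using fs x(2) by simp
  then show ?thesis using e by simp
qed

lemma rp_unique1: "regular_pair Ks s t \<Longrightarrow> regular_pair Ks s t' \<Longrightarrow> t = t'"
proof -
  assume a: "regular_pair Ks s t" "regular_pair Ks s t'"
  have "{s, t} = {s, t'}" using rp_stp[OF a(1)] rp_stp[OF a(2)] by simp
  moreover have "t \<noteq> s" using rp_stp[OF a(1)] by blast
  ultimately show ?thesis by (rule dbl1)
qed

lemma rp_unique2: "regular_pair Ks s t \<Longrightarrow> regular_pair Ks s' t \<Longrightarrow> s = s'"
proof -
  assume a: "regular_pair Ks s t" "regular_pair Ks s' t"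
  have e: "stp Ks s = stp Ks s'" using rp_stp[OF a(1)] rp_stp[OF a(2)] by simp
  have "{s, t} = {s', t}" using rp_stp[OF a(1)] rp_stp[OF a(2)] e by simp
  moreover have "s \<noteq> t" using rp_stp[OF a(1)] by blast
  ultimately show ?thesis by (rule dbl2)
qed

lemma rp_K: "regular_pair Ks s t \<Longrightarrow> s \<in> K \<and> t \<in> K"
proof -
  assume "regular_pair Ks s t"
  then obtain i where "Suc i < length Ks" "Ks ! Suc i - Ks ! i = {s, t}"
    unfolding regular_pair_def by blast
  then show ?thesis using KsK[of "Suc i"] by blast
qed

lemma cover: "s \<in> K \<Longrightarrow> critical Ks s \<or> lower_regular Ks s \<or> upper_regular Ks s"
proof -
  assume sK: "s \<in> K"
  define i where "i = stp Ks s"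
  have p: "Suc i < length Ks" "s \<in> Ks ! Suc i - Ks ! i"
    using stp_prop[OF sK] unfolding i_def by simp_all
  show ?thesis
  proof (cases "elem_filling (Ks ! Suc i) (Ks ! i)")
    case True
    then obtain \<nu> where nu: "facet (Ks ! Suc i) \<nu>" "Ks ! i = Ks ! Suc i - {\<nu>}"
      unfolding elem_filling_def by blast
    have "\<nu> \<in> Ks ! Suc i" using nu(1) by (simp add: facet_def)
    then have d: "Ks ! Suc i - Ks ! i = {\<nu>}" using nu(2) by blast
    then have "s = \<nu>" using p(2) by simp
    then have "Suc i < length Ks \<and> elem_filling (Ks ! Suc i) (Ks ! i) \<and> Ks ! Suc i - Ks ! i = {s}"
      using p(1) True d by simp
    then have "critical Ks s" unfolding critical_def by blast
    then show ?thesis by simp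
  next
    case False
    then have ee: "elem_expansion (Ks ! Suc i) (Ks ! i)" using step_cases p(1) by blast
    then obtain a b where ab: "free_pair (Ks ! Suc i) a b" "Ks ! i = Ks ! Suc i - {a, b}"
      unfolding elem_expansion_def by blast
    have ab': "a \<in> Ks ! Suc i" "b \<in> Ks ! Suc i" "a \<subset> b" using ab(1) unfolding free_pair_def by auto
    have d: "Ks ! Suc i - Ks ! i = {a, b}" using ab(2) ab'(1,2) by blast
    have "a \<subset> b \<and> Suc i < length Ks \<and> elem_expansion (Ks ! Suc i) (Ks ! i) \<and> Ks ! Suc i - Ks ! i = {a, b}"
      using ab'(3) p(1) ee d by simp
    then have rp: "regular_pair Ks a b" unfolding regular_pair_def by blast
    have "s = a \<or> s = b" using d p(2) by simp
    then show ?thesis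
    proof
      assume "s = a"
      then have "lower_regular Ks s" using rp unfolding lower_regular_def by blast
      then show ?thesis by simp
    next
      assume "s = b"
      then have "upper_regular Ks s" using rp unfolding upper_regular_def by blast
      then show ?thesis by simp
    qed
  qed
qed

lemma excl1: "critical Ks s \<Longrightarrow> \<not> lower_regular Ks s \<and> \<not> upper_regular Ks s"
proof -
  assume c: "critical Ks s"
  note i = crit_stp[OF c]
  have "\<not> regular_pair Ks s t" for t
  proof
    assume r: "regular_pair Ks s t"
    then have "{s} = {s, t}" using i rp_stp[OF r] by simp
    then have "s = t" by (rule sgl)
    then show False using rp_stp[OF r] by simp
  qed
  moreover have "\<not> regular_pair Ks t s" for t
  proof
    assume r: "regular_pair Ks t s"
    have "{s} = {t, s}" using i rp_stp[OF r] by simp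
    then have "t = s" by (rule sgl)
    then show False using rp_stp[OF r] by simp
  qed
  ultimately show ?thesis unfolding lower_regular_def upper_regular_def by blast
qed

lemma excl2: "lower_regular Ks s \<Longrightarrow> \<not> upper_regular Ks s"
proof
  assume "lower_regular Ks s" "upper_regular Ks s"
  then obtain t u where r1: "regular_pair Ks s t" and r2: "regular_pair Ks u s"
    unfolding lower_regular_def upper_regular_def by blast
  have st: "s \<subset> t" "u \<subset> s" using rp_stp[OF r1] rp_stp[OF r2] by simp_all
  have "{s, t} = {u, s}" using rp_stp[OF r1] rp_stp[OF r2] by simp
  then have "{t, s} = {u, s}" by (simp add: insert_commute)
  moreover have "t \<noteq> s" using st by blast
  ultimately have "t = u" by (rule dbl2)
  then show False using st by (simp add: order.asym)
qed

lemma mabs_ref: "mabs K (bd K) (critical Ks) (lower_regular Ks) (upper_regular Ks)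
   (\<lambda>s. SOME t. regular_pair Ks s t) (stp Ks) card"
proof
  show "finite K" using sc by (simp add: simplicial_complex_def)
  show "\<And>s. s \<in> K \<Longrightarrow> bd K s \<subseteq> K" by (auto simp: bd_def)
  show "\<And>s. s \<in> K \<Longrightarrow> lin (bd K) (bd K s) = {}" using bd_bd sc by blast
  show "\<And>s. s \<in> K \<Longrightarrow> critical Ks s \<or> lower_regular Ks s \<or> upper_regular Ks s" by (rule cover)
  show "\<And>s. s \<in> K \<Longrightarrow> critical Ks s \<Longrightarrow> \<not> lower_regular Ks s \<and> \<not> upper_regular Ks s" by (rule excl1)
  show "\<And>s. s \<in> K \<Longrightarrow> lower_regular Ks s \<Longrightarrow> \<not> upper_regular Ks s" by (rule excl2)
next
  fix s assume sK: "s \<in> K" and l: "lower_regular Ks s"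
  define t where "t = (SOME t. regular_pair Ks s t)"
  obtain t0 where "regular_pair Ks s t0" using l unfolding lower_regular_def by blast
  then have rp: "regular_pair Ks s t" unfolding t_def by (rule someI)
  define i where "i = stp Ks s"
  have i: "i = stp Ks s" "i = stp Ks t" "Suc i < length Ks"
    "simplicial_complex (Ks ! Suc i)" "free_pair (Ks ! Suc i) s t" "Ks ! i = Ks ! Suc i - {s, t}"
    using rp_free[OF rp] unfolding i_def by simp_all
  have ct: "card t = card s + 1" using free_card[OF i(4) i(5)] .
  have tK: "t \<in> K" using rp_K rp by blast
  have "upper_regular Ks t" using rp unfolding upper_regular_def by blast
  moreover have "s \<in> bd K t" using i(5) ct sK unfolding bd_def free_pair_def by auto
  moreover have "\<forall>\<rho>\<in>bd K t - {s}. stp Ks \<rho> < stp Ks s \<and> card \<rho> = card s"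
  proof
    fix \<rho> assume \<rho>: "\<rho> \<in> bd K t - {s}"
    then have \<rho>': "\<rho> \<in> K" "\<rho> \<subset> t" "card \<rho> + 1 = card t" "\<rho> \<noteq> s" by (auto simp: bd_def)
    have "\<rho> \<noteq> {}" using \<rho>' sc sc_fin by blast
    moreover have "t \<in> Ks ! Suc i" using i(5) unfolding free_pair_def by blast
    ultimately have "\<rho> \<in> Ks ! Suc i" using sc_sub[OF i(4)] \<rho>'(2) by blast
    then have "\<rho> \<in> Ks ! i" using i(6) \<rho>'(2,4) by blast
    moreover have "i < length Ks" using i(3) by simp
    ultimately have "stp Ks \<rho> < i" using stp_lt by blast
    then show "stp Ks \<rho> < stp Ks s \<and> card \<rho> = card s" using i(1) \<rho>'(3) ct by simp
  qed
  ultimately have "t \<in> K \<and> upper_regular Ks t \<and> s \<in> bd K t \<and>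
       (\<forall>\<rho>\<in>bd K t - {s}. stp Ks \<rho> < stp Ks s \<and> card \<rho> = card s)"
    using tK by blast
  then show "(SOME t. regular_pair Ks s t) \<in> K \<and> upper_regular Ks (SOME t. regular_pair Ks s t) \<and>
       s \<in> bd K (SOME t. regular_pair Ks s t) \<and>
       (\<forall>\<rho>\<in>bd K (SOME t. regular_pair Ks s t) - {s}. stp Ks \<rho> < stp Ks s \<and> card \<rho> = card s)"
    unfolding t_def .
next
  fix t assume tK: "t \<in> K" and u: "upper_regular Ks t"
  then obtain s where rp: "regular_pair Ks s t" unfolding upper_regular_def by blast
  have "(SOME t. regular_pair Ks s t) = t"
  proof (rule some_equality)
    show "regular_pair Ks s t" by (rule rp)
  next
    fix x assume "regular_pair Ks s x"
    then show "x = t" using rp_unique1[OF rp] by simp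
  qed
  moreover have "lower_regular Ks s" using rp unfolding lower_regular_def by blast
  moreover have "s \<in> K" using rp_K rp by blast
  ultimately show "\<exists>s\<in>K. lower_regular Ks s \<and> (SOME t. regular_pair Ks s t) = t" by blast
qed

lemma mabs_coref: "mabs K (cobd K) (critical Ks) (upper_regular Ks) (lower_regular Ks)
   (\<lambda>t. SOME s. regular_pair Ks s t) (\<lambda>s. length Ks - stp Ks s) card"
proof
  show "finite K" using sc by (simp add: simplicial_complex_def)
  show "\<And>s. s \<in> K \<Longrightarrow> cobd K s \<subseteq> K" by (auto simp: cobd_def)
  show "\<And>s. s \<in> K \<Longrightarrow> lin (cobd K) (cobd K s) = {}" using cobd_cobd sc by blast
  show "\<And>s. s \<in> K \<Longrightarrow> critical Ks s \<or> upper_regular Ks s \<or> lower_regular Ks s" using cover by blast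
  show "\<And>s. s \<in> K \<Longrightarrow> critical Ks s \<Longrightarrow> \<not> upper_regular Ks s \<and> \<not> lower_regular Ks s" using excl1 by blast
  show "\<And>s. s \<in> K \<Longrightarrow> upper_regular Ks s \<Longrightarrow> \<not> lower_regular Ks s" using excl2 by blast
next
  fix t assume tK: "t \<in> K" and l: "upper_regular Ks t"
  define s where "s = (SOME s. regular_pair Ks s t)"
  obtain s0 where "regular_pair Ks s0 t" using l unfolding upper_regular_def by blast
  then have rp: "regular_pair Ks s t" unfolding s_def by (rule someI)
  define i where "i = stp Ks s"
  have i: "i = stp Ks s" "i = stp Ks t" "Suc i < length Ks"
    "simplicial_complex (Ks ! Suc i)" "free_pair (Ks ! Suc i) s t" "Ks ! i = Ks ! Suc i - {s, t}"
    using rp_free[OF rp] unfolding i_def by simp_all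
  have ct: "card t = card s + 1" using free_card[OF i(4) i(5)] .
  have sK: "s \<in> K" using rp_K rp by blast
  have "lower_regular Ks s" using rp unfolding lower_regular_def by blast
  moreover have "t \<in> cobd K s" using i(5) ct tK unfolding cobd_def free_pair_def by auto
  moreover have "\<forall>\<rho>\<in>cobd K s - {t}. length Ks - stp Ks \<rho> < length Ks - stp Ks t \<and> card \<rho> = card t"
  proof
    fix \<rho> assume \<rho>: "\<rho> \<in> cobd K s - {t}"
    then have \<rho>': "\<rho> \<in> K" "s \<subset> \<rho>" "card \<rho> = card s + 1" "\<rho> \<noteq> t" by (auto simp: cobd_def)
    have "\<rho> \<notin> Ks ! Suc i" using i(5) \<rho>'(2,4) unfolding free_pair_def by blast
    then have "Suc i \<le> stp Ks \<rho>" using stp_ge[OF i(3) \<rho>'(1)] by blast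
    moreover have "Suc (stp Ks \<rho>) < length Ks" using stp_prop[OF \<rho>'(1)] by blast
    ultimately show "length Ks - stp Ks \<rho> < length Ks - stp Ks t \<and> card \<rho> = card t"
      using i(2) \<rho>'(3) ct by simp
  qed
  ultimately have "s \<in> K \<and> lower_regular Ks s \<and> t \<in> cobd K s \<and>
       (\<forall>\<rho>\<in>cobd K s - {t}. length Ks - stp Ks \<rho> < length Ks - stp Ks t \<and> card \<rho> = card t)"
    using sK by blast
  then show "(SOME s. regular_pair Ks s t) \<in> K \<and> lower_regular Ks (SOME s. regular_pair Ks s t) \<and>
       t \<in> cobd K (SOME s. regular_pair Ks s t) \<and>
       (\<forall>\<rho>\<in>cobd K (SOME s. regular_pair Ks s t) - {t}.
           length Ks - stp Ks \<rho> < length Ks - stp Ks t \<and> card \<rho> = card t)"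
    unfolding s_def .
next
  fix s assume sK: "s \<in> K" and u: "lower_regular Ks s"
  then obtain t where rp: "regular_pair Ks s t" unfolding lower_regular_def by blast
  have "(SOME s. regular_pair Ks s t) = s"
  proof (rule some_equality)
    show "regular_pair Ks s t" by (rule rp)
  next
    fix x assume "regular_pair Ks x t"
    then show "x = s" using rp_unique2[OF rp] by simp
  qed
  moreover have "upper_regular Ks t" using rp unfolding upper_regular_def by blast
  moreover have "t \<in> K" using rp_K rp by blast
  ultimately show "\<exists>t\<in>K. upper_regular Ks t \<and> (SOME s. regular_pair Ks s t) = s" by blast
qed

end

theorem theorem4:
  fixes K :: "'v set set" and Ks :: "'v set set list"
  assumes "simplicial_complex K" and "morse_seq K Ks"
  shows "\<forall>(p::int) c. c \<subseteq> simplices K p \<longrightarrow>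
           hat_bd K Ks (lin (reference K Ks) c) = lin (reference K Ks) (lin (bd K) c)
         \<and> hat_cobd K Ks (lin (coreference K Ks) c) = lin (coreference K Ks) (lin (cobd K) c)"
proof (intro allI impI)
  fix p :: int and c assume "c \<subseteq> simplices K p"
  then have cK: "c \<subseteq> K" by (auto simp: simplices_def)
  interpret R: mabs K "bd K" "critical Ks" "lower_regular Ks" "upper_regular Ks"
    "\<lambda>s. SOME t. regular_pair Ks s t" "stp Ks" card
    by (rule mabs_ref[OF assms])
  interpret C: mabs K "cobd K" "critical Ks" "upper_regular Ks" "lower_regular Ks"
    "\<lambda>t. SOME s. regular_pair Ks s t" "\<lambda>s. length Ks - stp Ks s" card
    by (rule mabs_coref[OF assms])
  have r: "reference K Ks = R.F"
    unfolding reference_def crit_valued_def by (rule R.the_F[unfolded R.P_def])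
  have c: "coreference K Ks = C.F"
    unfolding coreference_def crit_valued_def by (rule C.the_F[unfolded C.P_def])
  show "hat_bd K Ks (lin (reference K Ks) c) = lin (reference K Ks) (lin (bd K) c)
         \<and> hat_cobd K Ks (lin (coreference K Ks) c) = lin (coreference K Ks) (lin (cobd K) c)"
    unfolding hat_bd_def hat_cobd_def r c using R.main[OF cK] C.main[OF cK] by (rule conjI)
qed

end
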